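(* Let $\mathcal{H}$ be a Hilbert space, $H$ self-adjoint on $\mathcal{H}$, and $u:\mathbb{R}^+\to\mathcal{H}$ with $\sup_{t\ge0}\|u(t)\|<\infty$ and $u\in C^1(\mathbb{R}^+,\mathcal{H})\cap C^0(\mathbb{R}^+,{\rm Dom}\,H)$; set $r(t)=\partial_tu(t)+iHu(t)$. Let $t\mapsto M(t)\in B(\mathcal{H})$ have a bounded Heisenberg derivative $\mathcal{D}M(t)$ and suppose: (i) $\sup_t\|M(t)\|<\infty$ and $\|M(\cdot)r(\cdot)\|,\|M^*(\cdot)r(\cdot)\|\in L^1(\mathbb{R}^+,dt)$; (ii) $|(u_1|\mathcal{D}M(t)u_2)|\le\sum_{j=1}^n\|C_j(t)u_1\|\,\|C_j(t)u_2\|$ for all $u_1,u_2\in\mathcal{H}$, with $C_j(t)\in B(\mathcal{H})$ and $\int_{\mathbb{R}^+}\|C_j(t)u(t)\|^2dt<\infty$. Then $\lim_{t\to+\infty}(u(t)|M(t)u(t))$ exists.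
   Context: The Heisenberg derivative is $\mathcal{D}M(t)=\partial_tM(t)+[H,iM(t)]$, where $[H,iM(t)]$, defined as a quadratic form on ${\rm Dom}\,H$, is assumed to extend to a bounded operator. *)

theory Defs
  imports "HOL-Analysis.Analysis"
begin

text \<open>A complex Hilbert space is modelled as a real Banach space 'a together with
  a real-linear map J (multiplication by the imaginary unit) and a complex-valued
  inner product ip, antilinear in the first and linear in the second argument
  (physics convention (u1|u2)), whose induced norm is the norm of 'a.\<close>

definition complex_hilbert :: "('a::banach \<Rightarrow> 'a \<Rightarrow> complex) \<Rightarrow> ('a \<Rightarrow> 'a) \<Rightarrow> bool" where
  "complex_hilbert ip J \<longleftrightarrow>
     linear J \<and> (\<forall>x. J (J x) = - x) \<and>
     (\<forall>x y z. ip x (y + z) = ip x y + ip x z) \<and>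
     (\<forall>x y r. ip x (r *\<^sub>R y) = complex_of_real r * ip x y) \<and>
     (\<forall>x y. ip x (J y) = \<i> * ip x y) \<and>
     (\<forall>x y. ip y x = cnj (ip x y)) \<and>
     (\<forall>x. ip x x = complex_of_real ((norm x)\<^sup>2))"

definition bounded_clin :: "('a::real_normed_vector \<Rightarrow> 'a) \<Rightarrow> ('a \<Rightarrow> 'a) \<Rightarrow> bool" where
  "bounded_clin J A \<longleftrightarrow> bounded_linear A \<and> (\<forall>x. A (J x) = J (A x))"

definition is_adjoint :: "('a \<Rightarrow> 'a \<Rightarrow> complex) \<Rightarrow> ('a \<Rightarrow> 'a) \<Rightarrow> ('a \<Rightarrow> 'a) \<Rightarrow> bool" where
  "is_adjoint ip A B \<longleftrightarrow> (\<forall>x y. ip (B x) y = ip x (A y))"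

text \<open>H with domain D is a (possibly unbounded) self-adjoint operator:
  densely defined complex-linear operator with H = H^* (including equality of domains).\<close>
definition self_adjoint_op ::
  "('a::real_normed_vector \<Rightarrow> 'a \<Rightarrow> complex) \<Rightarrow> ('a \<Rightarrow> 'a) \<Rightarrow> 'a set \<Rightarrow> ('a \<Rightarrow> 'a) \<Rightarrow> bool" where
  "self_adjoint_op ip J D H \<longleftrightarrow>
     subspace D \<and> (\<forall>x\<in>D. J x \<in> D) \<and> closure D = UNIV \<and>
     (\<forall>x\<in>D. \<forall>y\<in>D. H (x + y) = H x + H y) \<and>
     (\<forall>x\<in>D. \<forall>r. H (r *\<^sub>R x) = r *\<^sub>R H x) \<and>
     (\<forall>x\<in>D. H (J x) = J (H x)) \<and>
     D = {y. \<exists>z. \<forall>x\<in>D. ip y (H x) = ip z x} \<and>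
     (\<forall>x\<in>D. \<forall>y\<in>D. ip y (H x) = ip (H y) x)"

end

theory Submission
  imports Defs
begin

context
  fixes ip :: "'a::banach \<Rightarrow> 'a \<Rightarrow> complex" and J
  assumes h: "complex_hilbert ip J"
begin

lemma ip_addR: "ip x (y + z) = ip x y + ip x z"
  using h unfolding complex_hilbert_def by blast
lemma ip_scaleR_R: "ip x (r *\<^sub>R y) = of_real r * ip x y"
  using h unfolding complex_hilbert_def by blast
lemma ip_J_R: "ip x (J y) = \<i> * ip x y"
  using h unfolding complex_hilbert_def by blast
lemma ip_cnj: "ip y x = cnj (ip x y)"
  using h unfolding complex_hilbert_def by blast
lemma ip_self: "ip x x = of_real ((norm x)\<^sup>2)"
  using h unfolding complex_hilbert_def by blast

lemma ip_addL: "ip (x + y) z = ip x z + ip y z"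
  by (metis complex_cnj_add ip_addR ip_cnj)

lemma ip_scaleR_L: "ip (r *\<^sub>R x) y = of_real r * ip x y"
  by (metis complex_cnj_complex_of_real complex_cnj_mult ip_cnj ip_scaleR_R)

lemma ip_J_L: "ip (J x) y = - \<i> * ip x y"
  by (metis complex_cnj_i complex_cnj_mult ip_J_R ip_cnj mult_minus_left)

lemma ip_minusR: "ip x (- y) = - ip x y"
  using ip_scaleR_R[of x "-1" y] by simp

lemma ip_diffR: "ip x (y - z) = ip x y - ip x z"
  using ip_addR[of x y "-z"] ip_minusR by simp

lemma ip_minusL: "ip (- x) y = - ip x y"
  using ip_scaleR_L[of "-1" x y] by simp

lemma ip_diffL: "ip (x - y) z = ip x z - ip y z"
  using ip_addL[of x "-y" z] ip_minusL by simp

lemma Re_ip_le: "Re (ip x y) \<le> norm x * norm y"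
proof -
  have e: "ip (x+y) (x+y) = ip x x + ip x y + ip y x + ip y y"
    by (simp add: ip_addL ip_addR add.assoc)
  have c: "ip y x = cnj (ip x y)" by (rule ip_cnj)
  have "(norm (x+y))\<^sup>2 = Re (ip (x+y) (x+y))" by (simp add: ip_self)
  also have "\<dots> = (norm x)\<^sup>2 + (norm y)\<^sup>2 + 2 * Re (ip x y)"
    unfolding e c by (simp add: ip_self)
  finally have "(norm (x+y))\<^sup>2 = (norm x)\<^sup>2 + (norm y)\<^sup>2 + 2 * Re (ip x y)" .
  moreover have "(norm (x+y))\<^sup>2 \<le> (norm x + norm y)\<^sup>2"
    by (simp add: norm_triangle_ineq power_mono)
  ultimately show ?thesis by (simp add: power2_eq_square algebra_simps)
qed

lemma abs_Re_ip_le: "\<bar>Re (ip x y)\<bar> \<le> norm x * norm y"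
  using Re_ip_le[of x y] Re_ip_le[of x "-y"] ip_minusR[of x y] by auto

lemma norm_J: "norm (J y) = norm y"
proof -
  have "ip (J y) (J y) = ip y y"
    using ip_J_L ip_J_R by simp
  then have "(norm (J y))\<^sup>2 = (norm y)\<^sup>2" using ip_self by (metis of_real_eq_iff)
  then show ?thesis by (simp add: power2_eq_iff_nonneg)
qed

lemma ip_bound: "cmod (ip x y) \<le> 2 * norm x * norm y"
proof -
  have "Im (ip x y) = - Re (ip x (J y))" using ip_J_R by simp
  then have "\<bar>Im (ip x y)\<bar> \<le> norm x * norm y" using abs_Re_ip_le[of x "J y"] norm_J by simp
  then show ?thesis using cmod_le[of "ip x y"] abs_Re_ip_le[of x y] by simp
qed

lemma bb_ip: "bounded_bilinear ip"
proof
  show "\<exists>K. \<forall>a b. norm (ip a b) \<le> norm a * norm b * K"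
    by (rule exI[of _ 2]) (use ip_bound in \<open>simp add: ac_simps\<close>)
qed (auto simp: ip_addL ip_addR ip_scaleR_L ip_scaleR_R scaleR_conv_of_real)

end

lemma op_vec_deriv:
  fixes M :: "real \<Rightarrow> 'a::real_normed_vector \<Rightarrow> 'a"
  assumes Mbd: "\<And>s v. s \<in> S \<Longrightarrow> norm (M s v) \<le> B * norm v"
    and Mlin: "\<And>s. s \<in> S \<Longrightarrow> bounded_linear (M s)"
    and Md: "\<And>v. ((\<lambda>s. M s v) has_vector_derivative dM v) (at t within S)"
    and ud: "(u has_vector_derivative u') (at t within S)"
  shows "((\<lambda>s. M s (u s)) has_vector_derivative (dM (u t) + M t u')) (at t within S)"
proof -
  define A where "A s = (1 / norm (s - t)) *\<^sub>R (M s (u t) - (M t (u t) + (s - t) *\<^sub>R dM (u t)))" for s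
  define U where "U s = (1 / norm (s - t)) *\<^sub>R (u s - (u t + (s - t) *\<^sub>R u'))" for s
  define Cc where "Cc s = ((s - t) / norm (s - t)) *\<^sub>R (M s u' - M t u')" for s
  have A0: "(A \<longlongrightarrow> 0) (at t within S)"
    using Md[of "u t"] unfolding A_def has_vector_derivative_def has_derivative_within by auto
  have U0: "(U \<longlongrightarrow> 0) (at t within S)"
    using ud unfolding U_def has_vector_derivative_def has_derivative_within by auto
  have B0: "((\<lambda>s. (1 / norm (s - t)) *\<^sub>R M s (u s - (u t + (s - t) *\<^sub>R u'))) \<longlongrightarrow> 0) (at t within S)"
  proof (rule Lim_null_comparison)
    show "\<forall>\<^sub>F s in at t within S. norm ((1 / norm (s - t)) *\<^sub>R M s (u s - (u t + (s - t) *\<^sub>R u'))) \<le> \<bar>B\<bar> * norm (U s)"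
      unfolding eventually_at_filter
    proof (intro always_eventually allI impI)
      fix s assume "s \<noteq> t" "s \<in> S"
      have "norm ((1 / norm (s - t)) *\<^sub>R M s (u s - (u t + (s - t) *\<^sub>R u'))) =
            norm (M s (U s))"
      proof -
        interpret L: bounded_linear "M s" using Mlin[OF \<open>s \<in> S\<close>] .
        show ?thesis unfolding U_def by (simp add: L.scaleR)
      qed
      also have "\<dots> \<le> B * norm (U s)" using Mbd[OF \<open>s \<in> S\<close>] .
      also have "\<dots> \<le> \<bar>B\<bar> * norm (U s)" by (simp add: mult_right_mono)
      finally show "norm ((1 / norm (s - t)) *\<^sub>R M s (u s - (u t + (s - t) *\<^sub>R u'))) \<le> \<bar>B\<bar> * norm (U s)" .
    qed
    show "((\<lambda>s. \<bar>B\<bar> * norm (U s)) \<longlongrightarrow> 0) (at t within S)"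
      using tendsto_mult_right_zero[OF tendsto_norm_zero[OF U0]] by simp
  qed
  have C0: "(Cc \<longlongrightarrow> 0) (at t within S)"
  proof (rule Lim_null_comparison)
    show "\<forall>\<^sub>F s in at t within S. norm (Cc s) \<le> norm (M s u' - M t u')"
      by (intro always_eventually allI) (simp add: Cc_def)
    have "continuous (at t within S) (\<lambda>s. M s u')"
      using Md[of u'] by (rule has_vector_derivative_continuous)
    then have "((\<lambda>s. M s u') \<longlongrightarrow> M t u') (at t within S)"
      by (simp add: continuous_within)
    then show "((\<lambda>s. norm (M s u' - M t u')) \<longlongrightarrow> 0) (at t within S)"
      using Lim_null tendsto_norm_zero by blast
  qed
  have "((\<lambda>s. A s + (1 / norm (s - t)) *\<^sub>R M s (u s - (u t + (s - t) *\<^sub>R u')) + Cc s) \<longlongrightarrow> 0) (at t within S)"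
    using tendsto_add[OF tendsto_add[OF A0 B0] C0] by simp
  then have "((\<lambda>s. (1 / norm (s - t)) *\<^sub>R (M s (u s) - (M t (u t) + (s - t) *\<^sub>R (dM (u t) + M t u')))) \<longlongrightarrow> 0) (at t within S)"
  proof (rule Lim_transform_eventually)
    show "\<forall>\<^sub>F s in at t within S. A s + (1 / norm (s - t)) *\<^sub>R M s (u s - (u t + (s - t) *\<^sub>R u')) + Cc s =
        (1 / norm (s - t)) *\<^sub>R (M s (u s) - (M t (u t) + (s - t) *\<^sub>R (dM (u t) + M t u')))"
      unfolding eventually_at_filter
    proof (intro always_eventually allI impI)
      fix s assume "s \<noteq> t" "s \<in> S"
      interpret L: bounded_linear "M s" using Mlin[OF \<open>s \<in> S\<close>] .
      have "(s - t) / norm (s - t) = (1 / norm (s - t)) * (s - t)" by simp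
      then show "A s + (1 / norm (s - t)) *\<^sub>R M s (u s - (u t + (s - t) *\<^sub>R u')) + Cc s =
        (1 / norm (s - t)) *\<^sub>R (M s (u s) - (M t (u t) + (s - t) *\<^sub>R (dM (u t) + M t u')))"
        unfolding A_def Cc_def
        by (simp only: L.diff L.add L.scaleR scaleR_right_diff_distrib scaleR_right_distrib
            scaleR_scaleR) (simp add: algebra_simps)
    qed
  qed
  then show ?thesis
    unfolding has_vector_derivative_def has_derivative_within
    by (auto intro: bounded_linear_scaleR_left)
qed


theorem lemmaA2:
  fixes ip :: "'a::banach \<Rightarrow> 'a \<Rightarrow> complex"
    and J :: "'a \<Rightarrow> 'a"
    and D :: "'a set" and H :: "'a \<Rightarrow> 'a"
    and u u' :: "real \<Rightarrow> 'a"
    and M Ms dM DM :: "real \<Rightarrow> 'a \<Rightarrow> 'a"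
    and n :: nat and C :: "nat \<Rightarrow> real \<Rightarrow> 'a \<Rightarrow> 'a"
  assumes hilb: "complex_hilbert ip J"
    and sa: "self_adjoint_op ip J D H"
    and u_bdd: "bounded (u ` {0..})"
    and u_deriv: "\<And>t. t \<ge> 0 \<Longrightarrow> (u has_vector_derivative u' t) (at t within {0..})"
    and u'_cont: "continuous_on {0..} u'"
    and u_dom: "\<And>t. t \<ge> 0 \<Longrightarrow> u t \<in> D"
    and Hu_cont: "continuous_on {0..} (\<lambda>t. H (u t))"
    and M_bdd_op: "\<And>t. t \<ge> 0 \<Longrightarrow> bounded_clin J (M t)"
    and M_deriv: "\<And>t v. t \<ge> 0 \<Longrightarrow> ((\<lambda>s. M s v) has_vector_derivative dM t v) (at t within {0..})"
    and dM_bdd_op: "\<And>t. t \<ge> 0 \<Longrightarrow> bounded_clin J (dM t)"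
    and DM_bdd_op: "\<And>t. t \<ge> 0 \<Longrightarrow> bounded_clin J (DM t)"
    and DM_heis: "\<And>t u1 u2. t \<ge> 0 \<Longrightarrow> u1 \<in> D \<Longrightarrow> u2 \<in> D \<Longrightarrow>
        ip u1 (DM t u2) = ip u1 (dM t u2) + \<i> * (ip (H u1) (M t u2) - ip u1 (M t (H u2)))"
    and M_unif: "\<exists>B. \<forall>t\<ge>0. onorm (M t) \<le> B"
    and Ms_adj: "\<And>t. t \<ge> 0 \<Longrightarrow> is_adjoint ip (M t) (Ms t)"
    and Mr_int: "(\<lambda>t. norm (M t (u' t + J (H (u t))))) integrable_on {0..}"
    and Msr_int: "(\<lambda>t. norm (Ms t (u' t + J (H (u t))))) integrable_on {0..}"
    and C_bdd_op: "\<And>j t. j \<in> {1..n} \<Longrightarrow> t \<ge> 0 \<Longrightarrow> bounded_clin J (C j t)"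
    and DM_est: "\<And>t u1 u2. t \<ge> 0 \<Longrightarrow>
        cmod (ip u1 (DM t u2)) \<le> (\<Sum>j=1..n. norm (C j t u1) * norm (C j t u2))"
    and C_int: "\<And>j. j \<in> {1..n} \<Longrightarrow> (\<lambda>t. (norm (C j t (u t)))\<^sup>2) integrable_on {0..}"
  shows "\<exists>L. ((\<lambda>t. ip (u t) (M t (u t))) \<longlongrightarrow> L) at_top"
  proof -
  note H = ip_addR[OF hilb] ip_addL[OF hilb] ip_J_R[OF hilb] ip_J_L[OF hilb]
  obtain B where B: "\<And>t. t \<ge> 0 \<Longrightarrow> onorm (M t) \<le> B" using M_unif by auto
  have Mlin: "\<And>t. t \<ge> 0 \<Longrightarrow> bounded_linear (M t)" using M_bdd_op by (simp add: bounded_clin_def)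
  have Mbd: "norm (M t v) \<le> B * norm v" if "t \<in> {0..}" for t v
  proof -
    have "norm (M t v) \<le> onorm (M t) * norm v" using that by (intro onorm Mlin) simp
    also have "\<dots> \<le> B * norm v" using B that by (simp add: mult_right_mono)
    finally show ?thesis .
  qed
  obtain U where U: "\<And>t. t \<ge> 0 \<Longrightarrow> norm (u t) \<le> U" using u_bdd unfolding bounded_iff by auto
  have U0: "U \<ge> 0" using U[of 0] norm_ge_zero[of "u 0"] by linarith
  define f where "f t = ip (u t) (M t (u t))" for t
  define f' where "f' t = ip (u t) (dM t (u t) + M t (u' t)) + ip (u' t) (M t (u t))" for t
  define r where "r t = u' t + J (H (u t))" for t
  define g where "g t = 2 * U * norm (Ms t (r t)) + 2 * U * norm (M t (r t)) + (\<Sum>j=1..n. (norm (C j t (u t)))\<^sup>2)" for t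
  have hd: "((\<lambda>s. M s (u s)) has_vector_derivative (dM t (u t) + M t (u' t))) (at t within {0..})"
    if "t \<ge> 0" for t
  proof (rule op_vec_deriv[where S="{0..}" and B=B and dM="dM t"])
    show "\<And>s v. s \<in> {0..} \<Longrightarrow> norm (M s v) \<le> B * norm v" by (rule Mbd)
    show "\<And>s. s \<in> {0..} \<Longrightarrow> bounded_linear (M s)" using Mlin by simp
    show "\<And>v. ((\<lambda>s. M s v) has_vector_derivative dM t v) (at t within {0..})" using M_deriv that by simp
    show "(u has_vector_derivative u' t) (at t within {0..})" using u_deriv that by simp
  qed
  have fd: "(f has_vector_derivative f' t) (at t within {0..})" if "t \<ge> 0" for t
    unfolding f_def f'_def
    by (rule bounded_bilinear.has_vector_derivative[OF bb_ip[OF hilb] u_deriv[OF that] hd[OF that]])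
  have key: "f' t = ip (Ms t (r t)) (u t) + ip (u t) (M t (r t)) + ip (u t) (DM t (u t))" if t: "t \<ge> 0" for t
  proof -
    interpret L: bounded_linear "M t" using Mlin t .
    have MJ: "M t (J x) = J (M t x)" for x using M_bdd_op[OF t] by (simp add: bounded_clin_def)
    have e1: "ip (Ms t (r t)) (u t) = ip (u' t) (M t (u t)) - \<i> * ip (H (u t)) (M t (u t))"
      using Ms_adj[OF t] unfolding is_adjoint_def r_def by (simp add: H)
    have e2: "ip (u t) (M t (r t)) = ip (u t) (M t (u' t)) + \<i> * ip (u t) (M t (H (u t)))"
      unfolding r_def by (simp add: L.add MJ H)
    have e3: "ip (u t) (DM t (u t)) = ip (u t) (dM t (u t)) + \<i> * (ip (H (u t)) (M t (u t)) - ip (u t) (M t (H (u t))))"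
      using DM_heis[OF t u_dom[OF t] u_dom[OF t]] .
    show ?thesis unfolding e1 e2 e3 f'_def by (simp add: H algebra_simps)
  qed
  have bound: "norm (f' t) \<le> g t" if t: "t \<in> {0..}" for t
  proof -
    have t0: "t \<ge> 0" using t by simp
    have b1: "cmod (ip (Ms t (r t)) (u t)) \<le> 2 * U * norm (Ms t (r t))"
    proof -
      have "cmod (ip (Ms t (r t)) (u t)) \<le> 2 * norm (Ms t (r t)) * norm (u t)" by (rule ip_bound[OF hilb])
      also have "\<dots> \<le> 2 * norm (Ms t (r t)) * U" using U[OF t0] by (simp add: mult_left_mono)
      finally show ?thesis by (simp add: ac_simps)
    qed
    have b2: "cmod (ip (u t) (M t (r t))) \<le> 2 * U * norm (M t (r t))"
    proof -
      have "cmod (ip (u t) (M t (r t))) \<le> 2 * norm (u t) * norm (M t (r t))" by (rule ip_bound[OF hilb])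
      also have "\<dots> \<le> 2 * U * norm (M t (r t))" using U[OF t0] by (simp add: mult_right_mono)
      finally show ?thesis .
    qed
    have b3: "cmod (ip (u t) (DM t (u t))) \<le> (\<Sum>j=1..n. (norm (C j t (u t)))\<^sup>2)"
      using DM_est[OF t0, of "u t" "u t"] by (simp add: power2_eq_square)
    show ?thesis unfolding key[OF t0] g_def
      using b1 b2 b3 norm_triangle_ineq[of "ip (Ms t (r t)) (u t) + ip (u t) (M t (r t))" "ip (u t) (DM t (u t))"]
        norm_triangle_ineq[of "ip (Ms t (r t)) (u t)" "ip (u t) (M t (r t))"] by simp
  qed
  have gint: "g integrable_on {0..}"
  proof -
    have g1: "(\<lambda>t. 2 * U * norm (Ms t (r t))) integrable_on {0..}"
      using integrable_cmul[OF Msr_int, of "2*U"] unfolding r_def by simp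
    have g2: "(\<lambda>t. 2 * U * norm (M t (r t))) integrable_on {0..}"
      using integrable_cmul[OF Mr_int, of "2*U"] unfolding r_def by simp
    have g3: "(\<lambda>t. \<Sum>j=1..n. (norm (C j t (u t)))\<^sup>2) integrable_on {0..}"
      by (rule integrable_sum) (auto intro: C_int)
    show ?thesis unfolding g_def by (intro integrable_add g1 g2 g3)
  qed
  have ftc: "(f' has_integral (f b - f 0)) {0..b}" if "b \<ge> 0" for b
    by (rule fundamental_theorem_of_calculus[OF that])
       (rule has_vector_derivative_within_subset[OF fd], auto)
  have f'int: "f' integrable_on {0..}"
  proof (rule integrable_on_all_intervals_integrable_bound[OF _ bound gint])
    fix a b :: real
    show "(\<lambda>x. if x \<in> {0..} then f' x else 0) integrable_on cbox a b"
      unfolding integrable_restrict_Int cbox_interval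
    proof (cases "max 0 a \<le> b")
      case True
      then have "f' integrable_on {0..b}" using ftc by auto
      moreover have "{0..} \<inter> {a..b} = {max 0 a..b}" by auto
      ultimately show "f' integrable_on {0..} \<inter> {a..b}"
        using integrable_subinterval_real True by fastforce
    next
      case False
      then have "{0..} \<inter> {a..b} = {}" by auto
      then show "f' integrable_on {0..} \<inter> {a..b}" by auto
    qed
  qed
  have aint: "f' absolutely_integrable_on {0..}"
    by (rule absolutely_integrable_integrable_bound[OF bound f'int gint])
  have lim: "((\<lambda>b. LINT x:{0..b}|lebesgue. f' x) \<longlongrightarrow> (LINT x:{0..}|lebesgue. f' x)) at_top"
    by (rule tendsto_set_lebesgue_integral_at_top) (use aint in auto)
  have ev: "\<forall>\<^sub>F b in at_top. f 0 + (LINT x:{0..b}|lebesgue. f' x) = f b"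
    using eventually_ge_at_top[of "0::real"]
  proof eventually_elim
    case (elim b)
    have "set_integrable lebesgue {0..b} f'"
      by (rule set_integrable_subset[OF aint]) auto
    then have "(LINT x:{0..b}|lebesgue. f' x) = integral {0..b} f'"
      by (rule set_lebesgue_integral_eq_integral)
    also have "\<dots> = f b - f 0" using ftc[OF elim] by (rule integral_unique)
    finally show ?case by simp
  qed
  have "(f \<longlongrightarrow> f 0 + (LINT x:{0..}|lebesgue. f' x)) at_top"
    using Lim_transform_eventually[OF tendsto_add[OF tendsto_const lim] ev] .
  then show ?thesis unfolding f_def by blast
qed

end
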